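(* Let $F_1,\dots,F_n$ be groups and let $F=F_1\times\dots\times F_n$ act on a set $X$. Let $x\in X$, let $\mathrm{Stab}(x)$ be its stabilizer in $F$, let $S_i=F_i\cap\mathrm{Stab}(x)$, and let $N_i$ be the normalizer of $S_i$ in $F_i$. Then $\mathrm{Stab}(x)\subset N_1\times\dots\times N_n$. In particular, if no $S_i$ is normal in $F_i$, then $\#(F\cdot x)\geq 2^n$. *)

theory Defs
  imports "HOL-Algebra.Group_Action" "HOL-Algebra.Product_Groups"
begin

definition factor_embed :: "'i set \<Rightarrow> ('i \<Rightarrow> ('g, 'c) monoid_scheme) \<Rightarrow> 'i \<Rightarrow> 'g \<Rightarrow> ('i \<Rightarrow> 'g)"
  where "factor_embed I G i g = (\<lambda>j\<in>I. if j = i then g else \<one>\<^bsub>G j\<^esub>)"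

text \<open>S_i = F_i \<inter> Stab(x), viewed as a subset of F_i.\<close>
definition factor_stab ::
  "'i set \<Rightarrow> ('i \<Rightarrow> ('g, 'c) monoid_scheme) \<Rightarrow> (('i \<Rightarrow> 'g) \<Rightarrow> 'b \<Rightarrow> 'b) \<Rightarrow> 'b \<Rightarrow> 'i \<Rightarrow> 'g set"
  where "factor_stab I G \<phi> x i =
    {g \<in> carrier (G i). factor_embed I G i g \<in> stabilizer (product_group I G) \<phi> x}"

end

theory Submission
  imports Defs
begin

lemma embed_carrier:
  assumes groups: "\<And>i. i < n \<Longrightarrow> group (F i)"
    and i: "i < n" and g: "g \<in> carrier (F i)"
  shows "factor_embed {..<n} F i g \<in> carrier (product_group {..<n} F)"
  using g groups by (auto simp: factor_embed_def PiE_iff intro: monoid.one_closed group.is_monoid)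

lemma conj_eq:
  assumes groups: "\<And>i. i < n \<Longrightarrow> group (F i)"
    and i: "i < n" and s: "s \<in> carrier (product_group {..<n} F)" and h: "h \<in> carrier (F i)"
  shows "factor_embed {..<n} F i (s i \<otimes>\<^bsub>F i\<^esub> h \<otimes>\<^bsub>F i\<^esub> inv\<^bsub>F i\<^esub> (s i))
     = s \<otimes>\<^bsub>product_group {..<n} F\<^esub> factor_embed {..<n} F i h \<otimes>\<^bsub>product_group {..<n} F\<^esub> inv\<^bsub>product_group {..<n} F\<^esub> s"
proof -
  have g2: "\<And>i. i \<in> {..<n} \<Longrightarrow> group (F i)" using groups by auto
  have inv: "inv\<^bsub>product_group {..<n} F\<^esub> s = (\<lambda>i\<in>{..<n}. inv\<^bsub>F i\<^esub> s i)"
    using inv_product_group[of s "{..<n}" F] s g2 by simp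
  show ?thesis
    using s
    apply (simp add: inv factor_embed_def)
    apply (rule ext)
    apply (auto simp: PiE_iff)
    apply (simp add: group.r_inv groups group.is_monoid monoid.r_one)
    done
qed

lemma stab_conj:
  assumes groups: "\<And>i. i < n \<Longrightarrow> group (F i)"
    and action: "group_action (product_group {..<n} F) X \<phi>"
    and x_in: "x \<in> X"
    and i: "i < n" and s: "s \<in> stabilizer (product_group {..<n} F) \<phi> x"
    and h: "h \<in> factor_stab {..<n} F \<phi> x i"
  shows "s i \<otimes>\<^bsub>F i\<^esub> h \<otimes>\<^bsub>F i\<^esub> inv\<^bsub>F i\<^esub> (s i) \<in> factor_stab {..<n} F \<phi> x i"
proof -
  interpret A: group_action "product_group {..<n} F" X \<phi> by (rule action)
  interpret G: group "F i" using groups i by auto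
  interpret SG: subgroup "stabilizer (product_group {..<n} F) \<phi> x" "product_group {..<n} F"
    using A.stabilizer_subgroup[OF x_in] .
  have sc: "s \<in> carrier (product_group {..<n} F)" using s A.stabilizer_subset by blast
  have si: "s i \<in> carrier (F i)" using sc i by (auto simp: PiE_iff)
  have hc: "h \<in> carrier (F i)" and he: "factor_embed {..<n} F i h \<in> stabilizer (product_group {..<n} F) \<phi> x"
    using h by (auto simp: factor_stab_def)
  have "s \<otimes>\<^bsub>product_group {..<n} F\<^esub> factor_embed {..<n} F i h \<otimes>\<^bsub>product_group {..<n} F\<^esub> inv\<^bsub>product_group {..<n} F\<^esub> s
     \<in> stabilizer (product_group {..<n} F) \<phi> x"
    using s he by (intro SG.m_closed SG.m_inv_closed)
  then show ?thesis
    using conj_eq[OF groups i sc hc] si hc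
    by (auto simp: factor_stab_def)
qed

lemma stab_norm:
  assumes groups: "\<And>i. i < n \<Longrightarrow> group (F i)"
    and action: "group_action (product_group {..<n} F) X \<phi>"
    and x_in: "x \<in> X"
    and i: "i < n" and s: "s \<in> stabilizer (product_group {..<n} F) \<phi> x"
  shows "s i \<in> normalizer (F i) (factor_stab {..<n} F \<phi> x i)"
proof -
  interpret A: group_action "product_group {..<n} F" X \<phi> by (rule action)
  interpret G: group "F i" using groups i by auto
  interpret SG: subgroup "stabilizer (product_group {..<n} F) \<phi> x" "product_group {..<n} F"
    using A.stabilizer_subgroup[OF x_in] .
  define S where "S = factor_stab {..<n} F \<phi> x i"
  have Sc: "S \<subseteq> carrier (F i)" by (auto simp: S_def factor_stab_def)
  have sc: "s \<in> carrier (product_group {..<n} F)" using s A.stabilizer_subset by blast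
  have si: "s i \<in> carrier (F i)" using sc i by (auto simp: PiE_iff)
  have is_: "inv\<^bsub>product_group {..<n} F\<^esub> s \<in> stabilizer (product_group {..<n} F) \<phi> x"
    using s by (rule SG.m_inv_closed)
  have invs: "(inv\<^bsub>product_group {..<n} F\<^esub> s) i = inv\<^bsub>F i\<^esub> s i"
    using inv_product_group[of s "{..<n}" F] sc groups i by simp
  have c1: "s i \<otimes>\<^bsub>F i\<^esub> h \<otimes>\<^bsub>F i\<^esub> inv\<^bsub>F i\<^esub> (s i) \<in> S" if "h \<in> S" for h
    using stab_conj[OF groups action x_in i s] that S_def by simp
  have c2: "inv\<^bsub>F i\<^esub> s i \<otimes>\<^bsub>F i\<^esub> h \<otimes>\<^bsub>F i\<^esub> s i \<in> S" if "h \<in> S" for h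
    using stab_conj[OF groups action x_in i is_] that S_def invs si by simp
  have eq: "s i <#\<^bsub>F i\<^esub> S #>\<^bsub>F i\<^esub> inv\<^bsub>F i\<^esub> s i = S"
  proof
    show "s i <#\<^bsub>F i\<^esub> S #>\<^bsub>F i\<^esub> inv\<^bsub>F i\<^esub> s i \<subseteq> S"
      using c1 by (auto simp: l_coset_def r_coset_def)
  next
    show "S \<subseteq> s i <#\<^bsub>F i\<^esub> S #>\<^bsub>F i\<^esub> inv\<^bsub>F i\<^esub> s i"
    proof
      fix h assume h: "h \<in> S"
      hence hc: "h \<in> carrier (F i)" using Sc by auto
      have "h = s i \<otimes>\<^bsub>F i\<^esub> (inv\<^bsub>F i\<^esub> s i \<otimes>\<^bsub>F i\<^esub> h \<otimes>\<^bsub>F i\<^esub> s i) \<otimes>\<^bsub>F i\<^esub> inv\<^bsub>F i\<^esub> s i"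
        using si hc by (simp add: G.m_assoc) (simp add: G.m_assoc[symmetric])
      then show "h \<in> s i <#\<^bsub>F i\<^esub> S #>\<^bsub>F i\<^esub> inv\<^bsub>F i\<^esub> s i"
        using c2[OF h] unfolding l_coset_def r_coset_def by blast
    qed
  qed
  show ?thesis
    using eq Sc si by (simp add: normalizer_def stabilizer_def S_def)
qed

lemma norm_conj:
  assumes G: "group G" and g: "g \<in> normalizer G S" and h: "h \<in> S" and Sc: "S \<subseteq> carrier G"
  shows "g \<otimes>\<^bsub>G\<^esub> h \<otimes>\<^bsub>G\<^esub> inv\<^bsub>G\<^esub> g \<in> S"
proof -
  have "g <#\<^bsub>G\<^esub> S #>\<^bsub>G\<^esub> inv\<^bsub>G\<^esub> g = S"
    using g Sc by (simp add: normalizer_def stabilizer_def)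
  moreover have "g \<otimes>\<^bsub>G\<^esub> h \<otimes>\<^bsub>G\<^esub> inv\<^bsub>G\<^esub> g \<in> g <#\<^bsub>G\<^esub> S #>\<^bsub>G\<^esub> inv\<^bsub>G\<^esub> g"
    using h unfolding l_coset_def r_coset_def by blast
  ultimately show ?thesis by simp
qed


lemma factor_stab_subgroup:
  assumes groups: "\<And>i. i < n \<Longrightarrow> group (F i)"
    and action: "group_action (product_group {..<n} F) X \<phi>"
    and x_in: "x \<in> X" and i: "i < n"
  shows "subgroup (factor_stab {..<n} F \<phi> x i) (F i)"
proof -
  interpret A: group_action "product_group {..<n} F" X \<phi> by (rule action)
  interpret G: group "F i" using groups i by auto
  interpret SG: subgroup "stabilizer (product_group {..<n} F) \<phi> x" "product_group {..<n} F"
    using A.stabilizer_subgroup[OF x_in] .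
  have g2: "\<And>i. i \<in> {..<n} \<Longrightarrow> group (F i)" using groups by auto
  have e1: "factor_embed {..<n} F i \<one>\<^bsub>F i\<^esub> = \<one>\<^bsub>product_group {..<n} F\<^esub>"
    by (auto simp: factor_embed_def)
  have em: "factor_embed {..<n} F i (a \<otimes>\<^bsub>F i\<^esub> b) = factor_embed {..<n} F i a \<otimes>\<^bsub>product_group {..<n} F\<^esub> factor_embed {..<n} F i b"
    if "a \<in> carrier (F i)" "b \<in> carrier (F i)" for a b
    apply (simp add: factor_embed_def)
    apply (rule ext)
    using groups by (auto simp: group.is_monoid monoid.r_one)
  have ei: "factor_embed {..<n} F i (inv\<^bsub>F i\<^esub> a) = inv\<^bsub>product_group {..<n} F\<^esub> (factor_embed {..<n} F i a)"
    if a: "a \<in> carrier (F i)" for a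
  proof -
    have c: "factor_embed {..<n} F i a \<in> carrier (product_group {..<n} F)"
      using embed_carrier[where n=n and F=F, OF groups i a] .
    have "inv\<^bsub>product_group {..<n} F\<^esub> (factor_embed {..<n} F i a) = (\<lambda>j\<in>{..<n}. inv\<^bsub>F j\<^esub> (factor_embed {..<n} F i a j))"
      using inv_product_group[of _ "{..<n}" F] c g2 by simp
    then show ?thesis
      apply simp
      apply (simp add: factor_embed_def)
      apply (rule ext)
      using groups by (auto simp: group.is_monoid monoid.inv_one)
  qed
  show ?thesis
  proof (rule G.subgroupI)
    show "factor_stab {..<n} F \<phi> x i \<subseteq> carrier (F i)" by (auto simp: factor_stab_def)
    show "factor_stab {..<n} F \<phi> x i \<noteq> {}"
      using e1 SG.one_closed by (auto simp: factor_stab_def)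
    show "inv\<^bsub>F i\<^esub> a \<in> factor_stab {..<n} F \<phi> x i" if "a \<in> factor_stab {..<n} F \<phi> x i" for a
      using that ei SG.m_inv_closed by (auto simp: factor_stab_def)
    show "a \<otimes>\<^bsub>F i\<^esub> b \<in> factor_stab {..<n} F \<phi> x i"
      if "a \<in> factor_stab {..<n} F \<phi> x i" "b \<in> factor_stab {..<n} F \<phi> x i" for a b
      using that em SG.m_closed by (auto simp: factor_stab_def)
  qed
qed

lemma distinct_points:
  assumes groups: "\<And>i. i < n \<Longrightarrow> group (F i)"
    and action: "group_action (product_group {..<n} F) X \<phi>"
    and x_in: "x \<in> X"
    and g: "\<And>j. j < n \<Longrightarrow> g j \<in> carrier (F j) \<and> g j \<notin> normalizer (F j) (factor_stab {..<n} F \<phi> x j)"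
    and iT: "i \<in> T" and iU: "i \<notin> U" and i: "i < n"
  shows "\<phi> (\<lambda>j\<in>{..<n}. if j \<in> T then g j else \<one>\<^bsub>F j\<^esub>) x \<noteq> \<phi> (\<lambda>j\<in>{..<n}. if j \<in> U then g j else \<one>\<^bsub>F j\<^esub>) x"
proof
  let ?P = "product_group {..<n} F"
  let ?hT = "\<lambda>j\<in>{..<n}. if j \<in> T then g j else \<one>\<^bsub>F j\<^esub>"
  let ?hU = "\<lambda>j\<in>{..<n}. if j \<in> U then g j else \<one>\<^bsub>F j\<^esub>"
  assume eq: "\<phi> ?hT x = \<phi> ?hU x"
  interpret A: group_action ?P X \<phi> by (rule action)
  interpret P: group ?P using groups by (intro product_group) auto
  have g2: "\<And>i. i \<in> {..<n} \<Longrightarrow> group (F i)" using groups by auto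
  have hT: "?hT \<in> carrier ?P" using g groups by (auto simp: PiE_iff group.is_monoid monoid.one_closed)
  have hU: "?hU \<in> carrier ?P" using g groups by (auto simp: PiE_iff group.is_monoid monoid.one_closed)
  have one: "\<phi> \<one>\<^bsub>?P\<^esub> x = x"
    using A.stabilizer_one_closed[OF x_in] by (simp add: stabilizer_def)
  have "\<phi> (inv\<^bsub>?P\<^esub> ?hU \<otimes>\<^bsub>?P\<^esub> ?hT) x = \<phi> (inv\<^bsub>?P\<^esub> ?hU) (\<phi> ?hT x)"
    using A.composition_rule[OF x_in P.inv_closed[OF hU] hT] .
  also have "\<dots> = \<phi> (inv\<^bsub>?P\<^esub> ?hU) (\<phi> ?hU x)" using eq by simp
  also have "\<dots> = \<phi> (inv\<^bsub>?P\<^esub> ?hU \<otimes>\<^bsub>?P\<^esub> ?hU) x"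
    using A.composition_rule[OF x_in P.inv_closed[OF hU] hU] by simp
  also have "\<dots> = x" by (simp only: P.l_inv[OF hU] one)
  finally have "inv\<^bsub>?P\<^esub> ?hU \<otimes>\<^bsub>?P\<^esub> ?hT \<in> stabilizer ?P \<phi> x"
    using P.m_closed[OF P.inv_closed[OF hU] hT] unfolding stabilizer_def by blast
  from stab_norm[OF groups action x_in i this]
  have N: "(inv\<^bsub>?P\<^esub> ?hU \<otimes>\<^bsub>?P\<^esub> ?hT) i \<in> normalizer (F i) (factor_stab {..<n} F \<phi> x i)" .
  have "inv\<^bsub>?P\<^esub> ?hU = (\<lambda>j\<in>{..<n}. inv\<^bsub>F j\<^esub> (?hU j))"
    using inv_product_group[of _ "{..<n}" F] hU g2 by simp
  hence "(inv\<^bsub>?P\<^esub> ?hU \<otimes>\<^bsub>?P\<^esub> ?hT) i = g i"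
    using i iT iU g[OF i] groups[OF i] by (simp add: group.is_monoid monoid.inv_one monoid.l_one)
  with N g[OF i] show False by simp
qed

theorem mainTheorem17:
  fixes n :: nat
    and F :: "nat \<Rightarrow> ('g, 'c) monoid_scheme"
    and X :: "'b set"
    and \<phi> :: "(nat \<Rightarrow> 'g) \<Rightarrow> 'b \<Rightarrow> 'b"
    and x :: 'b
  assumes groups: "\<And>i. i < n \<Longrightarrow> group (F i)"
    and action: "group_action (product_group {..<n} F) X \<phi>"
    and x_in: "x \<in> X"
  shows "stabilizer (product_group {..<n} F) \<phi> x
           \<subseteq> (\<Pi>\<^sub>E i\<in>{..<n}. normalizer (F i) (factor_stab {..<n} F \<phi> x i))
         \<and> ((\<forall>i<n. \<not> (factor_stab {..<n} F \<phi> x i \<lhd> F i)) \<longrightarrow>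
           infinite (orbit (product_group {..<n} F) \<phi> x)
           \<or> 2 ^ n \<le> card (orbit (product_group {..<n} F) \<phi> x))"
proof
  let ?P = "product_group {..<n} F"
  interpret A: group_action ?P X \<phi> by (rule action)
  show "stabilizer ?P \<phi> x \<subseteq> (\<Pi>\<^sub>E i\<in>{..<n}. normalizer (F i) (factor_stab {..<n} F \<phi> x i))"
  proof
    fix s assume s: "s \<in> stabilizer ?P \<phi> x"
    hence "s \<in> carrier ?P" using A.stabilizer_subset by blast
    then show "s \<in> (\<Pi>\<^sub>E i\<in>{..<n}. normalizer (F i) (factor_stab {..<n} F \<phi> x i))"
      using stab_norm[OF groups action x_in _ s] by (auto simp: PiE_iff)
  qed
  show "(\<forall>i<n. \<not> (factor_stab {..<n} F \<phi> x i \<lhd> F i)) \<longrightarrow>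
           infinite (orbit ?P \<phi> x) \<or> 2 ^ n \<le> card (orbit ?P \<phi> x)"
  proof (intro impI)
    assume nn: "\<forall>i<n. \<not> (factor_stab {..<n} F \<phi> x i \<lhd> F i)"
    have ex: "\<exists>g. g \<in> carrier (F j) \<and> g \<notin> normalizer (F j) (factor_stab {..<n} F \<phi> x j)"
      if j: "j < n" for j
    proof (rule ccontr)
      assume "\<not> ?thesis"
      hence all: "\<And>g. g \<in> carrier (F j) \<Longrightarrow> g \<in> normalizer (F j) (factor_stab {..<n} F \<phi> x j)" by blast
      have Sc: "factor_stab {..<n} F \<phi> x j \<subseteq> carrier (F j)" by (auto simp: factor_stab_def)
      have "factor_stab {..<n} F \<phi> x j \<lhd> F j"
        unfolding group.normal_inv_iff[OF groups[OF j]]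
        using factor_stab_subgroup[OF groups action x_in j] norm_conj[OF groups[OF j] all _ Sc] by blast
      with nn j show False by blast
    qed
    define g where "g j = (SOME g. g \<in> carrier (F j) \<and> g \<notin> normalizer (F j) (factor_stab {..<n} F \<phi> x j))" for j
    have gp: "\<And>j. j < n \<Longrightarrow> g j \<in> carrier (F j) \<and> g j \<notin> normalizer (F j) (factor_stab {..<n} F \<phi> x j)"
      unfolding g_def using ex by (rule someI_ex)
    define f where "f T = \<phi> (\<lambda>j\<in>{..<n}. if j \<in> T then g j else \<one>\<^bsub>F j\<^esub>) x" for T
    have inj: "inj_on f (Pow {..<n})"
    proof (rule inj_onI)
      fix T U assume T: "T \<in> Pow {..<n}" and U: "U \<in> Pow {..<n}" and e: "f T = f U"
      show "T = U"
      proof (rule ccontr)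
        assume "T \<noteq> U"
        then obtain i where "(i \<in> T \<and> i \<notin> U) \<or> (i \<in> U \<and> i \<notin> T)" by blast
        then show False
        proof
          assume a: "i \<in> T \<and> i \<notin> U"
          hence "i < n" using T by auto
          then show False using distinct_points[OF groups action x_in gp, of i T U] a e
            by (simp add: f_def)
        next
          assume a: "i \<in> U \<and> i \<notin> T"
          hence "i < n" using U by auto
          then show False using distinct_points[OF groups action x_in gp, of i U T] a e
            by (simp add: f_def)
        qed
      qed
    qed
    have sub: "f ` Pow {..<n} \<subseteq> orbit ?P \<phi> x"
    proof
      fix y assume "y \<in> f ` Pow {..<n}"
      then obtain T where y: "y = f T" by blast
      have "(\<lambda>j\<in>{..<n}. if j \<in> T then g j else \<one>\<^bsub>F j\<^esub>) \<in> carrier ?P"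
        using gp groups by (auto simp: PiE_iff group.is_monoid monoid.one_closed)
      then show "y \<in> orbit ?P \<phi> x" unfolding orbit_def y f_def by blast
    qed
    have "card (f ` Pow {..<n}) = 2 ^ n"
      using card_image[OF inj] by (simp add: card_Pow)
    then show "infinite (orbit ?P \<phi> x) \<or> 2 ^ n \<le> card (orbit ?P \<phi> x)"
      using card_mono[OF _ sub] by auto
  qed
qed

end
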